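(* Let $A$ be an $\mathbb{F}_p$-algebra, $\delta=(\delta_1,\ldots,\delta_n)$ an $n$-tuple of pairwise commuting derivations of $A$, $d_\nu\in\mathbb{N}\cup\{\infty\}$, and let $\{x_\nu^{[p^{k}]}\mid \nu=1,\ldots,n;\ k\in\mathbb{N},\ k<d_\nu\}$ be pairwise commuting elements of $A$. Put $x_\nu^{[0]}=1$, and for $0\le i<p^{d_\nu}$ written $i=\sum_ki_kp^k$ ($0\le i_k<p$) put $x_\nu^{[i]}=\prod_k\frac{(x_\nu^{[p^k]})^{i_k}}{i_k!}$; for $\alpha\in I=\{\alpha\in\mathbb{N}^n\mid\alpha_\nu<p^{d_\nu}\}$ put $x^{[\alpha]}=\prod_{\nu=1}^nx_\nu^{[\alpha_\nu]}$. Then $\{x^{[\alpha]}\mid\alpha\in I\}$ is an iterative $\delta$-descent if and only if $\delta_\nu(x_\mu^{[p^{k}]})=\delta_{\nu,\mu}x_\mu^{[p^{k}-1]}$ and $(x_\mu^{[p^{k}]})^p=0$ for all $\nu,\mu=1,\ldots,n$ and $k\in\mathbb{N}$ with $k<d_\mu$ ($\delta_{\nu,\mu}$ the Kronecker delta).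
   Context: A family $\{y^{[\alpha]}\mid\alpha\in I\}$ is an iterative $\delta$-descent if $y^{[0]}=1$, $y^{[\alpha]}y^{[\beta]}=\binom{\alpha+\beta}{\beta}y^{[\alpha+\beta]}$ for all $\alpha,\beta\in I$ ($\binom{\alpha+\beta}{\beta}=\prod_i\binom{\alpha_i+\beta_i}{\beta_i}$ in $\mathbb{F}_p$; right side $0$ when $\alpha+\beta\notin I$), and $\delta_1^{\alpha_1}\cdots\delta_n^{\alpha_n}(y^{[\beta]})=y^{[\beta-\alpha]}$ for all $\alpha\in\mathbb{N}^n$, $\beta\in I$, with $y^{[\gamma]}=0$ for $\gamma\notin\mathbb{N}^n$. *)

theory Defs
  imports Main "HOL-Library.Extended_Nat" "HOL-Computational_Algebra.Primes"
begin

text \<open>An F_p-algebra is modelled as a (not necessarily commutative) unital ring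
  'a :: ring_1 in which of_nat p = 0 for a prime p.\<close>

definition derivation :: "('a::ring_1 \<Rightarrow> 'a) \<Rightarrow> bool" where
  "derivation D \<longleftrightarrow> (\<forall>a b. D (a + b) = D a + D b) \<and> (\<forall>a b. D (a * b) = D a * b + a * D b)"

definition fp_inv :: "nat \<Rightarrow> nat \<Rightarrow> nat" where
  "fp_inv p m = (SOME c. (m * c) mod p = 1 mod p)"

text \<open>y^j / j! in an F_p-algebra (j < p).\<close>
definition divpow :: "nat \<Rightarrow> 'a::ring_1 \<Rightarrow> nat \<Rightarrow> 'a" where
  "divpow p y j = of_nat (fp_inv p (fact j)) * y ^ j"

definition digit :: "nat \<Rightarrow> nat \<Rightarrow> nat \<Rightarrow> nat" where
  "digit p i k = (i div p ^ k) mod p"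

text \<open>x^[i] = prod_k (x^[p^k])^(i_k) / i_k!, where g k stands for x^[p^k].
  Digits with k >= i vanish (p >= 2), so the product over k < i suffices.\<close>
definition dp_elem :: "nat \<Rightarrow> (nat \<Rightarrow> 'a::ring_1) \<Rightarrow> nat \<Rightarrow> 'a" where
  "dp_elem p g i = prod_list (map (\<lambda>k. divpow p (g k) (digit p i k)) [0..<i])"

text \<open>x^[alpha] = prod_{nu<n} x_nu^[alpha_nu] (indices nu = 0..n-1).\<close>
definition dp_multi :: "nat \<Rightarrow> nat \<Rightarrow> (nat \<Rightarrow> nat \<Rightarrow> 'a::ring_1) \<Rightarrow> (nat \<Rightarrow> nat) \<Rightarrow> 'a" where
  "dp_multi p n g \<alpha> = prod_list (map (\<lambda>\<nu>. dp_elem p (g \<nu>) (\<alpha> \<nu>)) [0..<n])"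

definition below_pow :: "nat \<Rightarrow> enat \<Rightarrow> nat \<Rightarrow> bool" where
  "below_pow p d i = (case d of enat m \<Rightarrow> i < p ^ m | \<infinity> \<Rightarrow> True)"

definition multi_idx :: "nat \<Rightarrow> (nat \<Rightarrow> nat) set" where
  "multi_idx n = {\<alpha>. \<forall>\<nu>. n \<le> \<nu> \<longrightarrow> \<alpha> \<nu> = 0}"

definition index_set :: "nat \<Rightarrow> nat \<Rightarrow> (nat \<Rightarrow> enat) \<Rightarrow> (nat \<Rightarrow> nat) set" where
  "index_set p n d = {\<alpha> \<in> multi_idx n. \<forall>\<nu><n. below_pow p (d \<nu>) (\<alpha> \<nu>)}"

definition multi_iter :: "nat \<Rightarrow> (nat \<Rightarrow> 'a \<Rightarrow> 'a) \<Rightarrow> (nat \<Rightarrow> nat) \<Rightarrow> 'a \<Rightarrow> 'a" where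
  "multi_iter n \<delta> \<alpha> = foldr (\<lambda>\<nu> f. (\<delta> \<nu> ^^ \<alpha> \<nu>) \<circ> f) [0..<n] id"

definition iterative_descent ::
  "nat \<Rightarrow> (nat \<Rightarrow> nat) set \<Rightarrow> (nat \<Rightarrow> 'a::ring_1 \<Rightarrow> 'a) \<Rightarrow> ((nat \<Rightarrow> nat) \<Rightarrow> 'a) \<Rightarrow> bool" where
  "iterative_descent n I \<delta> y \<longleftrightarrow>
     y (\<lambda>_. 0) = 1 \<and>
     (\<forall>\<alpha>\<in>I. \<forall>\<beta>\<in>I. y \<alpha> * y \<beta> =
        of_nat (\<Prod>\<nu><n. (\<alpha> \<nu> + \<beta> \<nu>) choose \<beta> \<nu>) *
        (if (\<lambda>\<nu>. \<alpha> \<nu> + \<beta> \<nu>) \<in> I then y (\<lambda>\<nu>. \<alpha> \<nu> + \<beta> \<nu>) else 0)) \<and>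
     (\<forall>\<alpha>\<in>multi_idx n. \<forall>\<beta>\<in>I. multi_iter n \<delta> \<alpha> (y \<beta>) =
        (if \<forall>\<nu><n. \<alpha> \<nu> \<le> \<beta> \<nu> then y (\<lambda>\<nu>. \<beta> \<nu> - \<alpha> \<nu>) else 0))"

end

theory Submission
  imports Defs "HOL-Number_Theory.Cong"
begin


lemma zero_choose_if: "(0 choose j) = (if j = 0 then 1 else 0)"
  by (cases j) auto

lemma choose_prime_cong:
  assumes "prime p" shows "[p choose j = (if j = 0 \<or> j = p then 1 else 0)] (mod p)"
proof -
  have "p > 1" using assms prime_gt_1_nat by blast
  show ?thesis
  proof (cases "j = 0 \<or> j = p")
    case True then show ?thesis by auto
  next
    case False
    show ?thesis
    proof (cases "j < p")
      case True
      then have "p dvd (p choose j)" using False assms by (intro dvd_choose_prime) auto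
      then show ?thesis using False by (simp add: cong_0_iff)
    next
      case False2: False
      have "p < j" using False False2 by auto
      then have "p choose j = 0" by (simp add: binomial_eq_0)
      then show ?thesis using False \<open>p < j\<close> by (simp add: binomial_eq_0)
    qed
  qed
qed

lemma choose_add_p_cong:
  assumes "prime p"
  shows "[(n + p) choose j = (n choose j) + (if p \<le> j then n choose (j - p) else 0)] (mod p)"
proof (induction n arbitrary: j)
  case 0
  have "p > 0" using assms prime_gt_0_nat by blast
  then show ?case using choose_prime_cong[OF assms, of j]
    by (cases "j = 0") (auto simp: zero_choose_if)
next
  case (Suc n)
  show ?case
  proof (cases j)
    case 0 then show ?thesis using prime_gt_0_nat[OF assms] by simp
  next
    case (Suc j')
    have "(Suc n + p) choose j = ((n + p) choose j') + ((n+p) choose Suc j')"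
      using Suc by simp
    also have "[\<dots> = ((n choose j') + (if p \<le> j' then n choose (j' - p) else 0))
       + ((n choose Suc j') + (if p \<le> Suc j' then n choose (Suc j' - p) else 0))] (mod p)"
      by (intro cong_add Suc.IH)
    also have "((n choose j') + (if p \<le> j' then n choose (j' - p) else 0))
       + ((n choose Suc j') + (if p \<le> Suc j' then n choose (Suc j' - p) else 0))
      = (Suc n choose j) + (if p \<le> j then Suc n choose (j - p) else 0)"
    proof -
      consider "p \<le> j'" | "Suc j' = p" | "Suc j' < p" by linarith
      then show ?thesis
      proof cases
        case 1
        then have "Suc j' - p = Suc (j' - p)" by simp
        then show ?thesis using 1 Suc by simp
      next
        case 2
        have h: "Suc n choose j = (n choose j') + (n choose Suc j')" using Suc by simp
        show ?thesis using 2 h Suc by simp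
      next
        case 3 then show ?thesis using Suc by simp
      qed
    qed
    finally show ?thesis .
  qed
qed

lemma choose_mult_p_cong:
  assumes "prime p"
  shows "[(p * a) choose j = (if p dvd j then a choose (j div p) else 0)] (mod p)"
proof (induction a arbitrary: j)
  case 0
  have "p > 0" using assms prime_gt_0_nat by blast
  then show ?case by (cases "j = 0") (auto simp: zero_choose_if)
next
  case (Suc a)
  have p0: "p > 0" using assms prime_gt_0_nat by blast
  have "(p * Suc a) choose j = (p * a + p) choose j" by (simp add: algebra_simps)
  also have "[\<dots> = ((p*a) choose j) + (if p \<le> j then (p*a) choose (j - p) else 0)] (mod p)"
    by (rule choose_add_p_cong[OF assms])
  also have "[((p*a) choose j) + (if p \<le> j then (p*a) choose (j - p) else 0) =
     (if p dvd j then a choose (j div p) else 0) +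
     (if p \<le> j then (if p dvd (j - p) then a choose ((j - p) div p) else 0) else 0)] (mod p)"
    by (intro cong_add Suc.IH) (auto simp: Suc.IH)
  also have "(if p dvd j then a choose (j div p) else 0) +
     (if p \<le> j then (if p dvd (j - p) then a choose ((j - p) div p) else 0) else 0)
     = (if p dvd j then Suc a choose (j div p) else 0)"
  proof (cases "p dvd j")
    case True
    then obtain c where c: "j = p * c" by blast
    show ?thesis
    proof (cases c)
      case 0 then show ?thesis using c p0 by simp
    next
      case (Suc c')
      have "j - p = p * c'" using c Suc by (simp add: algebra_simps)
      then show ?thesis using c Suc p0 by simp
    qed
  next
    case False
    then have "\<not> p dvd (j - p)" if "p \<le> j"
      using that by (metis dvd_diff_nat dvd_refl le_add_diff_inverse2 dvd_add)
    then show ?thesis using False by auto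
  qed
  finally show ?case .
qed

lemma lucas_core:
  assumes "prime p" "r < p" "s < p"
  shows "[(p * a + r) choose (p * b + s) = (a choose b) * (r choose s)] (mod p)"
  using assms(2,3)
proof (induction r arbitrary: b s)
  case 0
  have p0: "p > 0" using assms prime_gt_0_nat by blast
  have "[(p*a) choose (p*b+s) = (if p dvd (p*b+s) then a choose ((p*b+s) div p) else 0)] (mod p)"
    by (rule choose_mult_p_cong[OF assms(1)])
  moreover have "p dvd (p*b+s) \<longleftrightarrow> s = 0" using 0 by (auto simp: dvd_add_right_iff)
  ultimately show ?case using 0 p0 by (cases "s = 0") (auto simp: zero_choose_if)
next
  case (Suc r)
  have p0: "p > 0" using assms prime_gt_0_nat by blast
  show ?case
  proof (cases s)
    case 0
    show ?thesis
    proof (cases b)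
      case 0 then show ?thesis using \<open>s = 0\<close> by simp
    next
      case (Suc b')
      have e: "p * b + s = Suc (p * b' + (p - 1))" using Suc \<open>s=0\<close> p0 by (simp add: algebra_simps)
      have z: "r choose (p-1) = 0" using Suc.prems by simp
      have e2: "Suc (p * b' + (p - 1)) = p*(Suc b') + 0" using p0 by (simp add: algebra_simps)
      have "(p * a + Suc r) choose (p * b + s) = Suc (p * a + r) choose Suc (p * b' + (p - 1))"
        using e by simp
      also have "\<dots> = ((p*a + r) choose (p*b' + (p-1))) + ((p*a+r) choose Suc (p * b' + (p - 1)))"
        by (rule binomial_Suc_Suc)
      also have "\<dots> = ((p*a + r) choose (p*b' + (p-1))) + ((p*a+r) choose (p*(Suc b') + 0))"
        by (simp only: e2)
      also have "[\<dots> = (a choose b') * (r choose (p-1)) + (a choose Suc b') * (r choose 0)] (mod p)"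
        using Suc.prems p0 by (intro cong_add Suc.IH) auto
      also have "(a choose b') * (r choose (p-1)) + (a choose Suc b') * (r choose 0) = (a choose b) * (Suc r choose s)"
        using z Suc \<open>s = 0\<close> by simp
      finally show ?thesis .
    qed
  next
    case (Suc s')
    have "(p * a + Suc r) choose (p * b + s) = ((p*a + r) choose (p*b + s')) + ((p*a+r) choose (p*b + Suc s'))"
      using Suc by simp
    also have "[\<dots> = (a choose b) * (r choose s') + (a choose b) * (r choose Suc s')] (mod p)"
      using Suc.prems Suc by (intro cong_add Suc.IH) auto
    also have "(a choose b) * (r choose s') + (a choose b) * (r choose Suc s') = (a choose b) * (Suc r choose s)"
      using Suc by (simp add: algebra_simps)
    finally show ?thesis .
  qed
qed



lemma der_add: "derivation D \<Longrightarrow> D (a + b) = D a + D b"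
  by (simp add: derivation_def)
lemma der_mult: "derivation D \<Longrightarrow> D (a * b) = D a * b + a * D b"
  by (simp add: derivation_def)
lemma der_zero: "derivation D \<Longrightarrow> D 0 = 0"
  using der_add[of D 0 0] by simp
lemma der_one: "derivation D \<Longrightarrow> D 1 = 0"
  using der_mult[of D 1 1] by simp
lemma der_of_nat: "derivation D \<Longrightarrow> D (of_nat c) = 0"
  by (induction c) (simp_all add: der_zero der_one der_add)
lemma der_funpow_zero: "derivation D \<Longrightarrow> (D ^^ m) 0 = 0"
  by (induction m) (simp_all add: der_zero)

lemma der_power_kill: "derivation D \<Longrightarrow> D y = 0 \<Longrightarrow> D (y ^ q) = 0"
  by (induction q) (simp_all add: der_one der_mult)

lemma der_power:
  assumes D: "derivation D" and c: "y * D y = D y * y"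
  shows "D (y ^ Suc q) = of_nat (Suc q) * y ^ q * D y"
proof (induction q)
  case 0 then show ?case using D by (simp add: der_mult der_one)
next
  case (Suc q)
  have pc: "y ^ Suc q * D y = D y * y ^ Suc q" using power_commuting_commutes[OF c, of "Suc q"] by simp
  have "D (y ^ Suc (Suc q)) = D y * y ^ Suc q + y * (of_nat (Suc q) * y ^ q * D y)"
    using Suc D by (simp add: der_mult)
  also have "\<dots> = y ^ Suc q * D y + of_nat (Suc q) * (y * y ^ q) * D y"
  proof -
    have e2: "y * (of_nat (Suc q) * y ^ q * D y) = of_nat (Suc q) * (y * y ^ q) * D y"
      by (metis mult.assoc mult_of_nat_commute)
    show ?thesis using pc e2 by simp
  qed
  also have "\<dots> = of_nat (Suc (Suc q)) * y ^ Suc q * D y"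
    by (simp add: algebra_simps)
  finally show ?case .
qed

lemma der_prod_list_kill:
  "derivation D \<Longrightarrow> (\<forall>x\<in>set xs. D x = 0) \<Longrightarrow> D (prod_list xs) = 0"
  by (induction xs) (simp_all add: der_one der_mult)

lemma comm_prod_list:
  "(\<forall>y\<in>set ys. x * y = y * x) \<Longrightarrow> x * prod_list ys = prod_list ys * x"
proof (induction ys)
  case Nil then show ?case by simp
next
  case (Cons a ys)
  have "x * prod_list (a # ys) = (x * a) * prod_list ys" by (simp add: mult.assoc)
  also have "\<dots> = a * (x * prod_list ys)" using Cons by (simp add: mult.assoc)
  also have "\<dots> = prod_list (a # ys) * x" using Cons by (simp add: mult.assoc)
  finally show ?case .
qed

lemma comm_divpow: "x * y = y * x \<Longrightarrow> x * divpow p y j = divpow p y j * x"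
  unfolding divpow_def
  by (metis mult.assoc mult_of_nat_commute power_commuting_commutes)

lemma of_nat_mod_charp:
  assumes "of_nat p = (0::'a::ring_1)"
  shows "(of_nat x :: 'a) = of_nat (x mod p)"
proof -
  have "(of_nat x :: 'a) = of_nat (x mod p + p * (x div p))" by simp
  also have "\<dots> = of_nat (x mod p)" using assms by (simp only: of_nat_add of_nat_mult) simp
  finally show ?thesis .
qed

lemma of_nat_cong_charp:
  assumes "of_nat p = (0::'a::ring_1)" "[x = y] (mod p)"
  shows "(of_nat x :: 'a) = of_nat y"
  using assms of_nat_mod_charp[OF assms(1)] by (metis cong_def)

lemma fp_inv_spec:
  assumes "prime p" "\<not> p dvd m"
  shows "[m * fp_inv p m = 1] (mod p)"
proof -
  have "coprime m p" using prime_imp_coprime[OF assms] by (simp add: ac_simps)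
  then obtain c where "[m * c = Suc 0] (mod p)" using cong_solve_coprime_nat by blast
  then have "\<exists>c. (m * c) mod p = 1 mod p" by (auto simp: cong_def)
  then have "(m * fp_inv p m) mod p = 1 mod p" unfolding fp_inv_def by (rule someI_ex)
  then show ?thesis by (simp add: cong_def)
qed

lemma fact_not_dvd: "prime p \<Longrightarrow> j < p \<Longrightarrow> \<not> p dvd fact j"
  using prime_dvd_fact_iff by (metis not_le of_nat_fact of_nat_id)

lemma fp_inv_fact:
  assumes "prime p" "j < p"
  shows "[fact j * fp_inv p (fact j) = 1] (mod p)"
  using fp_inv_spec[OF assms(1) fact_not_dvd[OF assms]] .

context
  fixes p :: nat
  assumes prime: "prime p" and chp: "of_nat p = (0::'a::ring_1)"
begin

lemma p_gt1: "p > 1" using prime prime_gt_1_nat by blast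

lemma ofc: "[x = y] (mod p) \<Longrightarrow> (of_nat x :: 'a) = of_nat y"
  by (rule of_nat_cong_charp[OF chp])

lemma divpow0: "divpow p (y::'a) 0 = 1"
proof -
  have "[fp_inv p 1 = 1] (mod p)" using fp_inv_spec[OF prime, of 1] p_gt1 by simp
  then show ?thesis unfolding divpow_def using ofc by fastforce
qed

lemma divpow1: "divpow p (y::'a) 1 = y"
proof -
  have "[fp_inv p 1 = 1] (mod p)" using fp_inv_spec[OF prime, of 1] p_gt1 by simp
  then show ?thesis unfolding divpow_def using ofc by fastforce
qed

lemma inv_mult_cong:
  assumes "a + b < p"
  shows "[fp_inv p (fact a) * fp_inv p (fact b) = ((a+b) choose b) * fp_inv p (fact (a+b))] (mod p)"
proof -
  let ?A = "fp_inv p (fact a)" and ?B = "fp_inv p (fact b)" and ?C = "fp_inv p (fact (a+b))"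
  let ?k = "(a+b) choose b"
  have fa: "(fact (a+b)::nat) = fact b * fact a * ?k"
    using binomial_fact_lemma[of b "a+b"] by simp
  have "coprime p (fact (a+b)::nat)"
    by (rule prime_imp_coprime[OF prime fact_not_dvd[OF prime assms]])
  then have cop: "coprime (fact (a+b)::nat) p" by (simp add: coprime_commute)
  have "[?A * ?B * fact (a+b) = ?k * ((fact a * ?A) * (fact b * ?B))] (mod p)"
    by (simp add: fa ac_simps)
  also have "[?k * ((fact a * ?A) * (fact b * ?B)) = ?k * (1 * 1)] (mod p)"
    using fp_inv_fact[OF prime, of a] fp_inv_fact[OF prime, of b] assms
    by (intro cong_mult cong_refl) auto
  also have "[?k * (1 * 1) = ?k * (fact (a+b) * ?C)] (mod p)"
    using cong_mult[OF cong_refl[of ?k] cong_sym[OF fp_inv_fact[OF prime assms]]] by simp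
  also have "?k * (fact (a+b) * ?C) = ?k * ?C * fact (a+b)" by (simp add: ac_simps)
  finally show ?thesis using cong_mult_rcancel_nat[OF cop] by blast
qed

lemma divpow_mult:
  assumes "a + b < p"
  shows "divpow p (y::'a) a * divpow p y b = of_nat ((a+b) choose b) * divpow p y (a+b)"
proof -
  have "divpow p y a * divpow p y b = of_nat (fp_inv p (fact a)) * of_nat (fp_inv p (fact b)) * (y ^ a * y ^ b)"
    unfolding divpow_def by (metis mult.assoc mult_of_nat_commute)
  also have "\<dots> = of_nat (fp_inv p (fact a) * fp_inv p (fact b)) * y ^ (a + b)"
    by (simp add: power_add)
  also have "\<dots> = of_nat (((a+b) choose b) * fp_inv p (fact (a+b))) * y ^ (a + b)"
    using ofc[OF inv_mult_cong[OF assms]] by simp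
  finally show ?thesis unfolding divpow_def by (simp add: mult.assoc)
qed

lemma divpow_mult_zero:
  assumes "p \<le> a + b" "(y::'a) ^ p = 0"
  shows "divpow p y a * divpow p y b = 0"
proof -
  have "divpow p y a * divpow p y b = of_nat (fp_inv p (fact a)) * of_nat (fp_inv p (fact b)) * (y ^ a * y ^ b)"
    unfolding divpow_def by (metis mult.assoc mult_of_nat_commute)
  also have "y ^ a * y ^ b = y ^ p * y ^ (a + b - p)" using assms(1) by (simp flip: power_add)
  finally show ?thesis using assms(2) by simp
qed

lemma inv_der_cong:
  assumes "0 < q" "q < p"
  shows "[fp_inv p (fact q) * q = fp_inv p (fact (q - 1))] (mod p)"
proof -
  have "coprime p (fact (q-1)::nat)"
    using assms by (intro prime_imp_coprime[OF prime fact_not_dvd[OF prime]]) auto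
  then have cop: "coprime (fact (q-1)::nat) p" by (simp add: coprime_commute)
  have fq: "(fact q :: nat) = q * fact (q - 1)" using fact_reduce[OF assms(1), where 'a=nat] by (simp add: of_nat_id)
  have "[fp_inv p (fact q) * q * fact (q-1) = fact q * fp_inv p (fact q)] (mod p)"
    by (simp add: fq ac_simps)
  also have "[fact q * fp_inv p (fact q) = 1] (mod p)" using fp_inv_fact[OF prime assms(2)] .
  also have "[1 = fact (q-1) * fp_inv p (fact (q-1))] (mod p)"
    using fp_inv_fact[OF prime, of "q-1"] assms by (auto simp: cong_sym)
  also have "fact (q-1) * fp_inv p (fact (q-1)) = fp_inv p (fact (q - 1)) * fact (q-1)" by simp
  finally show ?thesis using cong_mult_rcancel_nat[OF cop] by blast
qed

lemma der_divpow:
  assumes D: "derivation D" and c: "(y::'a) * D y = D y * y" and q: "0 < q" "q < p"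
  shows "D (divpow p y q) = divpow p y (q - 1) * D y"
proof -
  obtain q' where q': "q = Suc q'" using q by (cases q) auto
  have "D (divpow p y q) = of_nat (fp_inv p (fact q)) * D (y ^ q)"
    unfolding divpow_def using D by (simp add: der_mult der_of_nat)
  also have "\<dots> = of_nat (fp_inv p (fact q)) * (of_nat q * y ^ q' * D y)"
    using der_power[OF D c, of q'] q' by simp
  also have "\<dots> = of_nat (fp_inv p (fact q) * q) * y ^ q' * D y"
    by (simp add: mult.assoc)
  also have "\<dots> = of_nat (fp_inv p (fact (q-1))) * y ^ (q - 1) * D y"
    using ofc[OF inv_der_cong[OF q]] q' by simp
  finally show ?thesis unfolding divpow_def by simp
qed

end


definition dpN :: "nat \<Rightarrow> nat \<Rightarrow> (nat \<Rightarrow> 'a::ring_1) \<Rightarrow> nat \<Rightarrow> 'a" where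
  "dpN p N g i = prod_list (map (\<lambda>k. divpow p (g k) (digit p i k)) [0..<N])"

lemma digit_Suc: "digit p i (Suc k) = digit p (i div p) k"
  unfolding digit_def by (simp add: div_mult2_eq)

lemma digit_top:
  assumes "k < N" "p > 0"
  shows "digit p (i mod p ^ N) k = digit p i k"
proof -
  have pN: "p ^ N = p ^ k * p ^ (N - k)" using assms by (simp flip: power_add)
  have "i mod p ^ N = p ^ k * (i div p ^ k mod p ^ (N - k)) + i mod p ^ k"
    unfolding pN by (rule mod_mult2_eq)
  then have "(i mod p ^ N) div p ^ k = i div p ^ k mod p ^ (N - k)"
    using assms by simp
  moreover have "p dvd p ^ (N - k)" using assms by simp
  ultimately show ?thesis unfolding digit_def by (simp add: mod_mod_cancel)
qed

lemma dpN_0 [simp]: "dpN p 0 g i = 1" by (simp add: dpN_def)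

lemma dpN_bottom:
  "dpN p (Suc N) g i = divpow p (g 0) (i mod p) * dpN p N (\<lambda>k. g (Suc k)) (i div p)"
proof -
  have "[0..<Suc N] = 0 # map Suc [0..<N]" by (simp add: map_Suc_upt upt_conv_Cons)
  then show ?thesis unfolding dpN_def by (simp add: digit_Suc o_def digit_def[of p i 0])
qed

lemma dpN_top:
  assumes "p > 0"
  shows "dpN p (Suc N) g i = dpN p N g (i mod p ^ N) * divpow p (g N) (i div p ^ N mod p)"
proof -
  have m: "map (\<lambda>k. divpow p (g k) (digit p i k)) [0..<N] = map (\<lambda>k. divpow p (g k) (digit p (i mod p ^ N) k)) [0..<N]"
    using digit_top[OF _ assms] by (intro map_cong) auto
  have "dpN p (Suc N) g i = prod_list (map (\<lambda>k. divpow p (g k) (digit p i k)) [0..<N]) * divpow p (g N) (digit p i N)"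
    by (simp add: dpN_def)
  also have "\<dots> = dpN p N g (i mod p ^ N) * divpow p (g N) (digit p i N)"
    by (simp only: m dpN_def)
  finally show ?thesis by (simp add: digit_def)
qed

lemma comm_dpN:
  "(\<forall>k<N. x * g k = g k * x) \<Longrightarrow> x * dpN p N g i = dpN p N g i * x"
  unfolding dpN_def by (intro comm_prod_list) (auto intro: comm_divpow)

lemma der_dpN_kill:
  assumes "derivation D" "\<forall>k<N. D (g k) = 0"
  shows "D (dpN p N g i) = 0"
  unfolding dpN_def using assms
  by (intro der_prod_list_kill) (auto simp: divpow_def der_mult der_of_nat der_power_kill)

context
  fixes p :: nat
  assumes prime: "prime p" and chp: "of_nat p = (0::'a::ring_1)"
begin

lemma p0: "p > 0" using prime prime_gt_0_nat by blast

lemma dpN_zero_idx: "dpN p N (g::nat \<Rightarrow> 'a) 0 = 1"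
  unfolding dpN_def digit_def using divpow0[OF prime chp]
  by (induction N) simp_all

lemma dpN_ext: "i < p ^ N \<Longrightarrow> dpN p (Suc N) (g::nat \<Rightarrow> 'a) i = dpN p N g i"
  using dpN_top[OF p0, of N g i] divpow0[OF prime chp] by simp

lemma dpN_mono: "i < p ^ N \<Longrightarrow> N \<le> M \<Longrightarrow> dpN p M (g::nat \<Rightarrow> 'a) i = dpN p N g i"
proof (induction M)
  case 0 then show ?case by simp
next
  case (Suc M)
  show ?case
  proof (cases "N = Suc M")
    case False
    then have "N \<le> M" using Suc by simp
    moreover have "p ^ N \<le> p ^ M" using \<open>N \<le> M\<close> p0 by (simp add: power_increasing)
    ultimately show ?thesis using Suc dpN_ext[of i M g] by simp
  qed simp
qed

lemma i_less_p_pow: "i < p ^ i"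
proof (induction i)
  case (Suc i)
  have "2 * p ^ i \<le> p * p ^ i" using p_gt1[OF prime chp] by simp
  moreover have "p ^ i > 0" using p0 by simp
  moreover have "p ^ Suc i = p * p ^ i" by simp
  ultimately show ?case using Suc.IH by linarith
qed simp

end


lemma divmod_helper: "(r::nat) < m \<Longrightarrow> (q * m + r) div m = q \<and> (q * m + r) mod m = r"
  by auto

context
  fixes p :: nat
  assumes prime: "prime p" and chp: "of_nat p = (0::'a::ring_1)"
begin

lemma dp_elem_eq: "i < p ^ N \<Longrightarrow> dp_elem p (g::nat \<Rightarrow> 'a) i = dpN p N g i"
proof -
  assume iN: "i < p ^ N"
  have e: "dp_elem p g i = dpN p i g i" by (simp add: dp_elem_def dpN_def)
  show ?thesis
  proof (cases "N \<le> i")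
    case True then show ?thesis using e dpN_mono[OF prime chp iN True, of g] by simp
  next
    case False
    then have "i \<le> N" by simp
    then show ?thesis using e dpN_mono[OF prime chp i_less_p_pow[OF prime chp] \<open>i \<le> N\<close>, of g] by simp
  qed
qed

lemma dpN_mult:
  assumes "\<forall>k<N. \<forall>l<N. (g::nat \<Rightarrow> 'a) k * g l = g l * g k" "\<forall>k<N. g k ^ p = 0"
    "i < p ^ N" "j < p ^ N"
  shows "dpN p N g i * dpN p N g j = of_nat ((i+j) choose j) * (if i + j < p ^ N then dpN p N g (i+j) else 0)"
  using assms
proof (induction N arbitrary: g i j)
  case 0 then show ?case by simp
next
  case (Suc N)
  have p0: "p > 0" using p0[OF prime chp] .
  define h where "h = (\<lambda>k. g (Suc k))"
  define a where "a = i div p"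
  define r where "r = i mod p"
  define b where "b = j div p"
  define s where "s = j mod p"
  have i: "i = p * a + r" and j: "j = p * b + s" unfolding a_def r_def b_def s_def by simp_all
  have rp: "r < p" "s < p" unfolding r_def s_def using p0 by simp_all
  have aN: "a < p ^ N" "b < p ^ N" using Suc.prems(3,4) unfolding a_def b_def
    by (simp_all add: less_mult_imp_div_less mult.commute)
  have Ei: "dpN p (Suc N) g i = divpow p (g 0) r * dpN p N h a"
    unfolding a_def r_def h_def by (rule dpN_bottom)
  have Ej: "dpN p (Suc N) g j = divpow p (g 0) s * dpN p N h b"
    unfolding b_def s_def h_def by (rule dpN_bottom)
  have hc: "\<forall>k<N. \<forall>l<N. h k * h l = h l * h k" "\<forall>k<N. h k ^ p = 0"
    using Suc.prems unfolding h_def by auto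
  have IH: "dpN p N h a * dpN p N h b = of_nat ((a+b) choose b) * (if a + b < p ^ N then dpN p N h (a+b) else 0)"
    using Suc.IH[OF hc aN] .
  have cm: "dpN p N h a * divpow p (g 0) s = divpow p (g 0) s * dpN p N h a"
  proof -
    have "\<forall>k<N. divpow p (g 0) s * h k = h k * divpow p (g 0) s"
      using Suc.prems(1) unfolding h_def by (auto intro!: comm_divpow[symmetric])
    then show ?thesis using comm_dpN by metis
  qed
  have L: "dpN p (Suc N) g i * dpN p (Suc N) g j = (divpow p (g 0) r * divpow p (g 0) s) * (dpN p N h a * dpN p N h b)"
    unfolding Ei Ej by (simp add: mult.assoc cm flip: mult.assoc[of "dpN p N h a"])
  show ?case
  proof (cases "r + s < p")
    case True
    have ij: "i + j = (a + b) * p + (r + s)" using i j by (simp add: algebra_simps)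
    have Eij: "dpN p (Suc N) g (i+j) = divpow p (g 0) (r+s) * dpN p N h (a+b)"
      using dpN_bottom[of p N g "i+j"] divmod_helper[OF True, of "a+b"] unfolding ij h_def by simp
    have lt: "i + j < p ^ Suc N \<longleftrightarrow> a + b < p ^ N"
    proof
      assume "i + j < p ^ Suc N"
      then have "(i+j) div p < p ^ N" using p0 by (simp add: less_mult_imp_div_less mult.commute)
      then show "a + b < p ^ N" using divmod_helper[OF True, of "a+b"] unfolding ij by simp
    next
      assume "a + b < p ^ N"
      then have "(a + b) * p + (r + s) < (a+b) * p + p" using True by simp
      also have "\<dots> = (a+b+1) * p" by (simp add: algebra_simps)
      also have "\<dots> \<le> p ^ N * p" using \<open>a + b < p ^ N\<close> by (intro mult_right_mono) auto
      finally show "i + j < p ^ Suc N" unfolding ij by (simp add: mult.commute)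
    qed
    have cg: "[(i+j) choose j = ((a+b) choose b) * ((r+s) choose s)] (mod p)"
    proof -
      have e1: "i + j = p * (a+b) + (r+s)" using ij by (simp add: mult.commute)
      show ?thesis using lucas_core[OF prime True rp(2), of "a+b" b] unfolding e1[symmetric] j[symmetric] .
    qed
    have "dpN p (Suc N) g i * dpN p (Suc N) g j =
      (of_nat ((r+s) choose s) * divpow p (g 0) (r+s)) * (of_nat ((a+b) choose b) * (if a + b < p ^ N then dpN p N h (a+b) else 0))"
      unfolding L IH divpow_mult[OF prime chp True] ..
    also have "\<dots> = of_nat (((a+b) choose b) * ((r+s) choose s)) * (if a + b < p ^ N then divpow p (g 0) (r+s) * dpN p N h (a+b) else 0)"
      by (cases "a + b < p ^ N") (simp_all add: mult.assoc, metis mult.assoc mult_of_nat_commute)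
    also have "\<dots> = of_nat ((i+j) choose j) * (if i + j < p ^ Suc N then dpN p (Suc N) g (i+j) else 0)"
      using ofc[OF prime chp cg] Eij lt by simp
    finally show ?thesis .
  next
    case False
    have z: "divpow p (g 0) r * divpow p (g 0) s = 0"
      using divpow_mult_zero[OF prime chp, of r s "g 0"] False Suc.prems(2) by simp
    have ij: "i + j = p * (a + b + 1) + (r + s - p)" using i j False by (simp add: algebra_simps)
    have "[(i+j) choose j = ((a+b+1) choose b) * ((r+s-p) choose s)] (mod p)"
      using lucas_core[OF prime _ rp(2), of "r+s-p" "a+b+1" b] rp unfolding ij[symmetric] j[symmetric] by simp
    moreover have "(r+s-p) choose s = 0" using rp False by simp
    ultimately have "(of_nat ((i+j) choose j) :: 'a) = 0" using ofc[OF prime chp] by fastforce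
    then show ?thesis using L z by simp
  qed
qed

lemma dpN_deriv:
  assumes D: "derivation D"
    and c: "\<forall>k<N. \<forall>l<N. (g::nat \<Rightarrow> 'a) k * g l = g l * g k"
    and np: "\<forall>k<N. g k ^ p = 0"
    and dg: "\<forall>k<N. D (g k) = dpN p k g (p ^ k - 1)"
    and iN: "i < p ^ N"
  shows "D (dpN p N g i) = (if i = 0 then 0 else dpN p N g (i - 1))"
  using c np dg iN
proof (induction N arbitrary: i)
  case 0 then show ?case using D by (simp add: der_one)
next
  case (Suc N)
  have p0: "p > 0" using p0[OF prime chp] .
  let ?E = "dpN p N g"
  define r where "r = i mod p ^ N"
  define q where "q = i div p ^ N"
  have rN: "r < p ^ N" unfolding r_def using p0 by simp
  have qp: "q < p" unfolding q_def using Suc.prems(4) p0 by (simp add: div_less_iff_less_mult mult.commute)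
  have i: "i = q * p ^ N + r" unfolding q_def r_def by (rule div_mult_mod_eq[symmetric])
  have Ei: "dpN p (Suc N) g i = ?E r * divpow p (g N) q"
    using dpN_top[OF p0, of N g i] qp unfolding r_def q_def by simp
  have cN: "\<forall>k<N. \<forall>l<N. g k * g l = g l * g k" "\<forall>k<N. g k ^ p = 0" "\<forall>k<N. D (g k) = dpN p k g (p ^ k - 1)"
    using Suc.prems by auto
  have IH: "\<And>i. i < p ^ N \<Longrightarrow> D (?E i) = (if i = 0 then 0 else ?E (i - 1))"
    using Suc.IH[OF cN] by blast
  have dgN: "D (g N) = ?E (p ^ N - 1)" using Suc.prems(3) by simp
  have cgN: "g N * D (g N) = D (g N) * g N"
    unfolding dgN using Suc.prems(1) by (intro comm_dpN) auto
  have cmE: "divpow p (g N) m * ?E x = ?E x * divpow p (g N) m" for m x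
    using Suc.prems(1) by (intro comm_dpN) (auto intro!: comm_divpow[symmetric])
  have dD: "D (divpow p (g N) q) = (if q = 0 then 0 else divpow p (g N) (q - 1) * ?E (p ^ N - 1))"
    using der_divpow[OF prime chp D cgN, of q] qp dgN divpow0[OF prime chp] der_one[OF D] by auto
  have "D (dpN p (Suc N) g i) = D (?E r) * divpow p (g N) q + ?E r * D (divpow p (g N) q)"
    unfolding Ei using D by (simp add: der_mult)
  also have "\<dots> = (if i = 0 then 0 else dpN p (Suc N) g (i - 1))"
  proof (cases "r = 0")
    case False
    have t2: "?E r * D (divpow p (g N) q) = 0"
    proof (cases "q = 0")
      case False
      have pN0: "p ^ N > 0" using p0 by simp
      have nl: "\<not> (r + (p ^ N - 1) < p ^ N)" using \<open>r \<noteq> 0\<close> pN0 by linarith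
      have z0: "?E r * ?E (p ^ N - 1) = 0"
        using dpN_mult[OF cN(1,2) rN, of "p ^ N - 1"] nl pN0 by (simp del: One_nat_def)
      have s1: "?E r * D (divpow p (g N) q) = ?E r * divpow p (g N) (q - 1) * ?E (p ^ N - 1)"
        using False dD by (simp add: mult.assoc)
      have s2: "?E r * divpow p (g N) (q - 1) * ?E (p ^ N - 1) = divpow p (g N) (q - 1) * (?E r * ?E (p ^ N - 1))"
        by (simp only: mult.assoc[symmetric] cmE)
      show ?thesis unfolding s1 s2 z0 by simp
    qed (simp add: divpow0[OF prime chp] der_one[OF D])
    have im: "i - 1 = q * p ^ N + (r - 1)" using i False by simp
    have "dpN p (Suc N) g (i - 1) = ?E (r - 1) * divpow p (g N) q"
      using dpN_top[OF p0, of N g "i - 1"] divmod_helper[of "r - 1" "p ^ N" q] rN qp unfolding im by simp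
    then show ?thesis using t2 IH[OF rN] False i by simp
  next
    case True
    have t1: "D (?E r) = 0" using IH[OF rN] True by simp
    show ?thesis
    proof (cases "q = 0")
      case True then show ?thesis using t1 dD \<open>r = 0\<close> i by simp
    next
      case False
      have im: "i - 1 = (q - 1) * p ^ N + (p ^ N - 1)" using i False \<open>r = 0\<close> p0
        by (cases q) (auto simp: algebra_simps)
      have "dpN p (Suc N) g (i - 1) = ?E (p ^ N - 1) * divpow p (g N) (q - 1)"
        using dpN_top[OF p0, of N g "i - 1"] divmod_helper[of "p ^ N - 1" "p ^ N" "q - 1"] p0 qp
        unfolding im by simp
      then show ?thesis using t1 dD False \<open>r = 0\<close> i dpN_zero_idx[OF prime chp] cmE p0 by simp
    qed
  qed
  finally show ?case .
qed

end


lemma prod_list_map_mult: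
  "(\<forall>x\<in>set L. \<forall>y\<in>set L. f x * h y = h y * f x) \<Longrightarrow>
   prod_list (map f L) * prod_list (map h L) = prod_list (map (\<lambda>x. f x * h x) L)"
proof (induction L)
  case Nil then show ?case by simp
next
  case (Cons a L)
  have c: "h a * prod_list (map f L) = prod_list (map f L) * h a"
    using Cons.prems by (intro comm_prod_list) (auto simp: eq_commute)
  have "prod_list (map f (a # L)) * prod_list (map h (a # L)) = f a * (prod_list (map f L) * h a) * prod_list (map h L)"
    by (simp add: mult.assoc)
  also have "\<dots> = (f a * h a) * (prod_list (map f L) * prod_list (map h L))"
    by (simp add: c[symmetric] mult.assoc)
  also have "\<dots> = prod_list (map (\<lambda>x. f x * h x) (a # L))"
    using Cons by simp
  finally show ?case .
qed

lemma prod_list_of_nat: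
  "prod_list (map (\<lambda>x. of_nat (c x) * (z x :: 'a::ring_1)) L) = of_nat (prod_list (map c L)) * prod_list (map z L)"
proof (induction L)
  case (Cons a L)
  have "of_nat (c a) * z a * (of_nat (prod_list (map c L)) * prod_list (map z L)) =
        of_nat (c a) * of_nat (prod_list (map c L)) * (z a * prod_list (map z L))"
    by (metis mult.assoc mult_of_nat_commute)
  then show ?case using Cons by simp
qed simp

lemma prod_list_if_zero:
  "prod_list (map (\<lambda>x. if P x then w x else (0::'a::ring_1)) L) = (if \<forall>x\<in>set L. P x then prod_list (map w L) else 0)"
  by (induction L) auto

lemma prod_list_zero: "(0::'a::ring_1) \<in> set xs \<Longrightarrow> prod_list xs = 0"
  by (induction xs) auto

lemma der_prod_list_single:
  assumes D: "derivation D" and dist: "distinct L" and nu: "\<nu> \<in> set L"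
    and k: "\<forall>\<mu>\<in>set L. \<mu> \<noteq> \<nu> \<longrightarrow> D (f \<mu>) = 0"
  shows "D (prod_list (map f L)) = prod_list (map (\<lambda>\<mu>. if \<mu> = \<nu> then D (f \<nu>) else f \<mu>) L)"
  using dist nu k
proof (induction L)
  case Nil then show ?case by simp
next
  case (Cons a L)
  show ?case
  proof (cases "a = \<nu>")
    case True
    then have nL: "\<nu> \<notin> set L" using Cons.prems by simp
    have "D (prod_list (map f L)) = 0"
      using Cons.prems nL by (intro der_prod_list_kill[OF D]) auto
    moreover have "prod_list (map (\<lambda>a. if a = \<nu> then D (f \<nu>) else f a) L) = prod_list (map f L)"
      using nL by (intro arg_cong[where f=prod_list] map_cong) auto
    ultimately show ?thesis using True D by (simp add: der_mult)
  next
    case False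
    then have "\<nu> \<in> set L" using Cons.prems by simp
    then have "D (prod_list (map f L)) = prod_list (map (\<lambda>\<mu>. if \<mu> = \<nu> then D (f \<nu>) else f \<mu>) L)"
      using Cons by simp
    then show ?thesis using False Cons.prems D by (simp add: der_mult)
  qed
qed

lemma prod_upt_conv: "(\<Prod>\<nu><n. c \<nu>) = prod_list (map c [0..<n])"
  by (metis atLeast0LessThan distinct_upt prod.distinct_set_conv_list set_upt)

context
  fixes p :: nat
  assumes prime: "prime p" and chp: "of_nat p = (0::'a::ring_1)"
begin

lemma choose_N: "below_pow p dd i \<Longrightarrow> \<exists>N. i < p ^ N \<and> (\<forall>k<N. enat k < dd)"
  by (cases dd) (auto simp: below_pow_def intro: i_less_p_pow[OF prime chp])

lemma dp_elem_comm:
  assumes "\<forall>k. enat k < dd \<longrightarrow> x * G k = G k * (x::'a)" "below_pow p dd i"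
  shows "x * dp_elem p G i = dp_elem p G i * x"
proof -
  obtain N where N: "i < p ^ N" "\<forall>k<N. enat k < dd" using choose_N[OF assms(2)] by blast
  show ?thesis unfolding dp_elem_eq[OF prime chp N(1)] using assms(1) N(2) by (intro comm_dpN) auto
qed

lemma dp_elem_kill:
  assumes "derivation D" "\<forall>k. enat k < dd \<longrightarrow> D (G k) = (0::'a)" "below_pow p dd i"
  shows "D (dp_elem p G i) = 0"
proof -
  obtain N where N: "i < p ^ N" "\<forall>k<N. enat k < dd" using choose_N[OF assms(3)] by blast
  show ?thesis unfolding dp_elem_eq[OF prime chp N(1)] using assms(1,2) N(2) by (intro der_dpN_kill) auto
qed

lemma dp_elem_mult:
  assumes c: "\<forall>k l. enat k < dd \<longrightarrow> enat l < dd \<longrightarrow> G k * G l = G l * (G k :: 'a)"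
    and np: "\<forall>k. enat k < dd \<longrightarrow> G k ^ p = 0"
    and i: "below_pow p dd i" and j: "below_pow p dd j"
  shows "dp_elem p G i * dp_elem p G j = of_nat ((i+j) choose j) * (if below_pow p dd (i+j) then dp_elem p G (i+j) else 0)"
proof (cases dd)
  case (enat m)
  have im: "i < p ^ m" "j < p ^ m" using i j enat by (simp_all add: below_pow_def)
  have cN: "\<forall>k<m. \<forall>l<m. G k * G l = G l * G k" "\<forall>k<m. G k ^ p = 0" using c np enat by auto
  show ?thesis
    using dpN_mult[OF prime chp cN im] dp_elem_eq[OF prime chp im(1)] dp_elem_eq[OF prime chp im(2)]
      dp_elem_eq[OF prime chp, of "i+j" m G] enat by (simp add: below_pow_def)
next
  case infinity
  have ij: "i + j < p ^ (i+j)" using i_less_p_pow[OF prime chp] .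
  have im: "i < p ^ (i+j)" "j < p ^ (i+j)" using ij by simp_all
  have cN: "\<forall>k<i+j. \<forall>l<i+j. G k * G l = G l * G k" "\<forall>k<i+j. G k ^ p = 0" using c np infinity by auto
  show ?thesis
    using dpN_mult[OF prime chp cN im] dp_elem_eq[OF prime chp im(1)] dp_elem_eq[OF prime chp im(2)]
      dp_elem_eq[OF prime chp ij] ij infinity by (simp add: below_pow_def)
qed

lemma dp_elem_deriv:
  assumes D: "derivation D"
    and c: "\<forall>k l. enat k < dd \<longrightarrow> enat l < dd \<longrightarrow> G k * G l = G l * (G k :: 'a)"
    and np: "\<forall>k. enat k < dd \<longrightarrow> G k ^ p = 0"
    and dg: "\<forall>k. enat k < dd \<longrightarrow> D (G k) = dp_elem p G (p ^ k - 1)"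
    and i: "below_pow p dd i"
  shows "D (dp_elem p G i) = (if i = 0 then 0 else dp_elem p G (i - 1))"
proof -
  obtain N where N: "i < p ^ N" "\<forall>k<N. enat k < dd" using choose_N[OF i] by blast
  have cN: "\<forall>k<N. \<forall>l<N. G k * G l = G l * G k" "\<forall>k<N. G k ^ p = 0" using c np N(2) by auto
  have dN: "\<forall>k<N. D (G k) = dpN p k G (p ^ k - 1)"
  proof (intro allI impI)
    fix k assume "k < N"
    have "p ^ k - 1 < p ^ k" using p0[OF prime chp] by simp
    then show "D (G k) = dpN p k G (p ^ k - 1)" using dg N(2) \<open>k < N\<close> dp_elem_eq[OF prime chp] by metis
  qed
  have "i - 1 < p ^ N" using N(1) by simp
  then show ?thesis using dpN_deriv[OF prime chp D cN dN N(1)] dp_elem_eq[OF prime chp N(1)]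
      dp_elem_eq[OF prime chp, of "i - 1" N G] by simp
qed

end


lemma below_pow_mono: "below_pow p dd i \<Longrightarrow> j \<le> i \<Longrightarrow> below_pow p dd j"
  by (cases dd) (auto simp: below_pow_def)

lemma dp_elem_0 [simp]: "dp_elem p G 0 = 1"
  by (simp add: dp_elem_def)

lemma index_set_dec:
  assumes "\<alpha> \<in> index_set p n d" "\<forall>\<nu>. \<beta> \<nu> \<le> \<alpha> \<nu>"
  shows "\<beta> \<in> index_set p n d"
  using assms unfolding index_set_def multi_idx_def
  by (auto intro: below_pow_mono) (metis le_zero_eq)

lemma foldr_zero:
  "(\<forall>x\<in>set L. \<alpha> x = 0) \<Longrightarrow> foldr (\<lambda>\<nu> f. (\<delta> \<nu> ^^ \<alpha> \<nu>) \<circ> f) L h = h"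
  by (induction L) auto

lemma multi_iter_single:
  assumes "\<nu> < n"
  shows "multi_iter n \<delta> (\<lambda>x. if x = \<nu> then 1 else 0) = \<delta> \<nu>"
proof -
  have L: "[0..<n] = [0..<\<nu>] @ \<nu> # [Suc \<nu>..<n]"
  proof -
    have "[0..<n] = [0..<\<nu>] @ [\<nu>..<n]" using upt_add_eq_append[of 0 \<nu> "n - \<nu>"] assms by simp
    then show ?thesis using upt_conv_Cons[OF assms] by simp
  qed
  show ?thesis unfolding multi_iter_def L
    by (simp add: foldr_zero)
qed

lemma lam1: "(\<lambda>\<nu>. if \<nu> = \<mu> then 1 * x else 0) = (\<lambda>\<nu>. if \<nu> = \<mu> then x else (0::nat))"
  by (rule ext) simp

lemma prod_list_single:
  "distinct L \<Longrightarrow> \<mu> \<in> set L \<Longrightarrow> (\<forall>x\<in>set L. x \<noteq> \<mu> \<longrightarrow> f x = (1::'a::monoid_mult)) \<Longrightarrow> prod_list (map f L) = f \<mu>"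
proof (induction L)
  case (Cons a L)
  show ?case
  proof (cases "a = \<mu>")
    case True
    then have "prod_list (map f L) = 1" using Cons.prems
      by (induction L) auto
    then show ?thesis using True by simp
  next
    case False then show ?thesis using Cons by simp
  qed
qed simp

lemma dp_multi_single:
  assumes "\<mu> < n"
  shows "dp_multi p n g (\<lambda>\<nu>. if \<nu> = \<mu> then i else 0) = dp_elem p (g \<mu>) i"
  unfolding dp_multi_def using assms by (subst prod_list_single[of _ \<mu>]) auto

context
  fixes p :: nat
  assumes prime: "prime p" and chp: "of_nat p = (0::'a::ring_1)"
begin

lemma dp_elem_pk:
  assumes "m < p"
  shows "dp_elem p (G :: nat \<Rightarrow> 'a) (m * p ^ k) = divpow p (G k) m"
proof -
  have p0: "p > 0" using p0[OF prime chp] .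
  have lt: "m * p ^ k < p ^ Suc k" using assms p0 by simp
  show ?thesis
    unfolding dp_elem_eq[OF prime chp lt] dpN_top[OF p0] using p0 assms
    by (simp add: dpN_zero_idx[OF prime chp])
qed

lemma forward:
  fixes n :: nat and \<delta> :: "nat \<Rightarrow> 'a \<Rightarrow> 'a" and d :: "nat \<Rightarrow> enat" and g :: "nat \<Rightarrow> nat \<Rightarrow> 'a"
  assumes desc: "iterative_descent n (index_set p n d) \<delta> (dp_multi p n g)"
  shows "(\<forall>\<nu><n. \<forall>\<mu><n. \<forall>k. enat k < d \<mu> \<longrightarrow>
        \<delta> \<nu> (g \<mu> k) = (if \<nu> = \<mu> then dp_elem p (g \<mu>) (p ^ k - 1) else 0)) \<and>
     (\<forall>\<mu><n. \<forall>k. enat k < d \<mu> \<longrightarrow> g \<mu> k ^ p = 0)"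
proof -
  have p0: "p > 0" using p0[OF prime chp] .
  have p1: "p > 1" using p_gt1[OF prime chp] .
  let ?I = "index_set p n d"
  let ?y = "dp_multi p n g"
  have mem: "(\<lambda>\<nu>. if \<nu> = \<mu> then c * p ^ k else 0) \<in> ?I"
    if "\<mu> < n" "enat k < d \<mu>" "c < p" for \<mu> k c
  proof -
    have "below_pow p (d \<mu>) (c * p ^ k)"
    proof (cases "d \<mu>")
      case (enat m)
      then have "k < m" using that by simp
      have "c * p ^ k < p ^ Suc k" using that p0 by simp
      also have "\<dots> \<le> p ^ m" using \<open>k < m\<close> p0 by (intro power_increasing) auto
      finally show ?thesis using enat by (simp add: below_pow_def)
    qed (simp add: below_pow_def)
    moreover have "below_pow p dd 0" for dd using p0 by (cases dd) (auto simp: below_pow_def)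
    ultimately show ?thesis using that unfolding index_set_def multi_idx_def by auto
  qed
  have yk: "?y (\<lambda>\<nu>. if \<nu> = \<mu> then c * p ^ k else 0) = divpow p (g \<mu> k) c"
    if "\<mu> < n" "c < p" for \<mu> k c
    using dp_multi_single[OF that(1), of p g "c * p ^ k"] dp_elem_pk[OF that(2), of "g \<mu>" k] by simp
  have g1: "?y (\<lambda>\<nu>. if \<nu> = \<mu> then p ^ k else 0) = g \<mu> k" if "\<mu> < n" for \<mu> k
  proof -
    have "(\<lambda>\<nu>. if \<nu> = \<mu> then 1 * p ^ k else 0) = (\<lambda>\<nu>. if \<nu> = \<mu> then p ^ k else (0::nat))" by (rule ext) simp
    then show ?thesis using yk[OF that p1, of k] divpow1[OF prime chp, of "g \<mu> k"] by metis
  qed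
  have A: "\<delta> \<nu> (g \<mu> k) = (if \<nu> = \<mu> then dp_elem p (g \<mu>) (p ^ k - 1) else 0)"
    if "\<nu> < n" "\<mu> < n" "enat k < d \<mu>" for \<nu> \<mu> k
  proof -
    let ?e = "\<lambda>x. if x = \<nu> then 1 else (0::nat)"
    let ?b = "\<lambda>x. if x = \<mu> then p ^ k else (0::nat)"
    have "?e \<in> multi_idx n" using that unfolding multi_idx_def by auto
    moreover have "?b \<in> ?I" using mem[OF that(2,3) p1] by (simp only: lam1)
    ultimately have "multi_iter n \<delta> ?e (?y ?b) = (if \<forall>x<n. ?e x \<le> ?b x then ?y (\<lambda>x. ?b x - ?e x) else 0)"
      using desc unfolding iterative_descent_def by blast
    then have E: "\<delta> \<nu> (g \<mu> k) = (if \<forall>x<n. ?e x \<le> ?b x then ?y (\<lambda>x. ?b x - ?e x) else 0)"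
      using multi_iter_single[OF that(1), of \<delta>] g1[OF that(2)] by simp
    show ?thesis
    proof (cases "\<nu> = \<mu>")
      case True
      have c: "\<forall>x<n. ?e x \<le> ?b x" using True p0 by auto
      have f: "(\<lambda>x. ?b x - ?e x) = (\<lambda>x. if x = \<mu> then p ^ k - 1 else 0)" using True by auto
      have "\<delta> \<nu> (g \<mu> k) = ?y (\<lambda>x. if x = \<mu> then p ^ k - 1 else 0)" using E c f by simp
      also have "\<dots> = dp_elem p (g \<mu>) (p ^ k - 1)" by (rule dp_multi_single[OF that(2)])
      finally show ?thesis using True by simp
    next
      case False
      have nc: "\<not> (\<forall>x<n. ?e x \<le> ?b x)" using False that(1) by (auto intro!: exI[of _ \<nu>])
      show ?thesis using E[unfolded if_not_P[OF nc]] False by simp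
    qed
  qed
  have B: "g \<mu> k ^ p = 0" if "\<mu> < n" "enat k < d \<mu>" for \<mu> k
  proof -
    let ?a = "\<lambda>x. if x = \<mu> then 1 * p ^ k else (0::nat)"
    let ?b = "\<lambda>x. if x = \<mu> then (p - 1) * p ^ k else (0::nat)"
    have a: "?a \<in> ?I" using mem[OF that p1] .
    have b: "?b \<in> ?I" using mem[OF that, of "p - 1"] p0 by simp
    have "?y ?a * ?y ?b = of_nat (\<Prod>x<n. (?a x + ?b x) choose ?b x) *
        (if (\<lambda>x. ?a x + ?b x) \<in> ?I then ?y (\<lambda>x. ?a x + ?b x) else 0)"
      using desc a b unfolding iterative_descent_def by blast
    moreover have "(\<Prod>x<n. (?a x + ?b x) choose ?b x) = (\<Prod>x<n. if x = \<mu> then (p ^ Suc k) choose ((p - 1) * p ^ k) else 1)"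
    proof (rule prod.cong)
      fix x assume "x \<in> {..<n}"
      have "p ^ k + (p - 1) * p ^ k = p ^ Suc k" using p0 by (cases p) (auto simp: algebra_simps)
      then show "(?a x + ?b x) choose ?b x = (if x = \<mu> then (p ^ Suc k) choose ((p - 1) * p ^ k) else 1)"
        by simp
    qed simp
    moreover have "p dvd ((p ^ Suc k) choose ((p - 1) * p ^ k))"
    proof -
      have s: "(p - 1) * p ^ k = p ^ Suc k - p ^ k" using p0 by (simp add: algebra_simps)
      have "(p ^ Suc k) choose ((p - 1) * p ^ k) = (p ^ Suc k) choose (p ^ k)"
        unfolding s by (rule binomial_symmetric[symmetric]) (use p0 in simp)
      moreover have "p ^ k * ((p ^ Suc k) choose (p ^ k)) = p ^ k * (p * ((p ^ Suc k - 1) choose (p ^ k - 1)))"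
        using times_binomial_minus1_eq[of "p ^ k" "p ^ Suc k"] p0 by (simp add: ac_simps)
      ultimately show ?thesis using p0 by simp
    qed
    ultimately have "?y ?a * ?y ?b = 0"
      using that chp by (auto simp: prod.delta elim!: dvdE)
    then have z: "g \<mu> k * divpow p (g \<mu> k) (p - 1) = 0"
      using yk[OF that(1) p1, of k] yk[OF that(1), of "p - 1" k] p0 divpow1[OF prime chp] by simp
    let ?U = "fp_inv p (fact (p - 1))"
    have "g \<mu> k * divpow p (g \<mu> k) (p - 1) = of_nat ?U * (g \<mu> k * g \<mu> k ^ (p - 1))"
      unfolding divpow_def by (metis mult.assoc mult_of_nat_commute)
    also have "g \<mu> k * g \<mu> k ^ (p - 1) = g \<mu> k ^ p" using p0 by (cases p) auto
    finally have z2: "of_nat ?U * g \<mu> k ^ p = 0" using z by simp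
    have "[fact (p - 1) * ?U = 1] (mod p)" using fp_inv_fact[OF prime, of "p - 1"] p0 by simp
    then have "(of_nat (fact (p - 1) * ?U) :: 'a) = 1" using ofc[OF prime chp] by fastforce
    then have "g \<mu> k ^ p = of_nat (fact (p - 1)) * (of_nat ?U * g \<mu> k ^ p)"
      by (simp flip: mult.assoc)
    then show ?thesis using z2 by simp
  qed
  show ?thesis using A B by blast
qed

end


context
  fixes p :: nat and n :: nat and \<delta> :: "nat \<Rightarrow> 'a::ring_1 \<Rightarrow> 'a" and d :: "nat \<Rightarrow> enat" and g :: "nat \<Rightarrow> nat \<Rightarrow> 'a"
  assumes prime: "prime p" and chp: "of_nat p = (0::'a)"
    and der: "\<forall>\<nu><n. derivation (\<delta> \<nu>)"
    and cm: "\<forall>\<nu><n. \<forall>\<mu><n. \<forall>k l. enat k < d \<nu> \<longrightarrow> enat l < d \<mu> \<longrightarrow>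
           g \<nu> k * g \<mu> l = g \<mu> l * g \<nu> k"
    and H1: "\<forall>\<nu><n. \<forall>\<mu><n. \<forall>k. enat k < d \<mu> \<longrightarrow>
        \<delta> \<nu> (g \<mu> k) = (if \<nu> = \<mu> then dp_elem p (g \<mu>) (p ^ k - 1) else 0)"
    and H2: "\<forall>\<mu><n. \<forall>k. enat k < d \<mu> \<longrightarrow> g \<mu> k ^ p = 0"
begin

lemma E_comm:
  assumes "\<nu> < n" "\<mu> < n" "below_pow p (d \<nu>) i" "below_pow p (d \<mu>) j"
  shows "dp_elem p (g \<nu>) i * dp_elem p (g \<mu>) j = dp_elem p (g \<mu>) j * dp_elem p (g \<nu>) i"
proof -
  have "g \<mu> l * dp_elem p (g \<nu>) i = dp_elem p (g \<nu>) i * g \<mu> l" if "enat l < d \<mu>" for l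
    using cm assms that by (intro dp_elem_comm[OF prime chp, of "d \<nu>"]) auto
  then show ?thesis using assms by (intro dp_elem_comm[OF prime chp, of "d \<mu>"]) auto
qed

lemma index_set_iff: "\<alpha> \<in> index_set p n d \<longleftrightarrow> \<alpha> \<in> multi_idx n \<and> (\<forall>\<nu><n. below_pow p (d \<nu>) (\<alpha> \<nu>))"
  by (simp add: index_set_def)

lemma y_mult:
  assumes a: "\<alpha> \<in> index_set p n d" and b: "\<beta> \<in> index_set p n d"
  shows "dp_multi p n g \<alpha> * dp_multi p n g \<beta> =
        of_nat (\<Prod>\<nu><n. (\<alpha> \<nu> + \<beta> \<nu>) choose \<beta> \<nu>) *
        (if (\<lambda>\<nu>. \<alpha> \<nu> + \<beta> \<nu>) \<in> index_set p n d then dp_multi p n g (\<lambda>\<nu>. \<alpha> \<nu> + \<beta> \<nu>) else 0)"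
proof -
  have ab: "\<forall>\<nu><n. below_pow p (d \<nu>) (\<alpha> \<nu>)" "\<forall>\<nu><n. below_pow p (d \<nu>) (\<beta> \<nu>)"
    using a b by (auto simp: index_set_iff)
  have "dp_multi p n g \<alpha> * dp_multi p n g \<beta> =
      prod_list (map (\<lambda>\<nu>. dp_elem p (g \<nu>) (\<alpha> \<nu>) * dp_elem p (g \<nu>) (\<beta> \<nu>)) [0..<n])"
    unfolding dp_multi_def using ab by (intro prod_list_map_mult) (auto intro!: E_comm)
  also have "\<dots> = prod_list (map (\<lambda>\<nu>. of_nat ((\<alpha> \<nu> + \<beta> \<nu>) choose \<beta> \<nu>) *
      (if below_pow p (d \<nu>) (\<alpha> \<nu> + \<beta> \<nu>) then dp_elem p (g \<nu>) (\<alpha> \<nu> + \<beta> \<nu>) else 0)) [0..<n])"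
  proof (intro arg_cong[where f=prod_list] map_cong refl)
    fix \<nu> assume "\<nu> \<in> set [0..<n]"
    then have nu: "\<nu> < n" by simp
    show "dp_elem p (g \<nu>) (\<alpha> \<nu>) * dp_elem p (g \<nu>) (\<beta> \<nu>) = of_nat ((\<alpha> \<nu> + \<beta> \<nu>) choose \<beta> \<nu>) *
      (if below_pow p (d \<nu>) (\<alpha> \<nu> + \<beta> \<nu>) then dp_elem p (g \<nu>) (\<alpha> \<nu> + \<beta> \<nu>) else 0)"
      using nu cm H2 ab by (intro dp_elem_mult[OF prime chp]) auto
  qed
  also have "\<dots> = of_nat (prod_list (map (\<lambda>\<nu>. (\<alpha> \<nu> + \<beta> \<nu>) choose \<beta> \<nu>) [0..<n])) *
      (if \<forall>\<nu>\<in>set [0..<n]. below_pow p (d \<nu>) (\<alpha> \<nu> + \<beta> \<nu>) then prod_list (map (\<lambda>\<nu>. dp_elem p (g \<nu>) (\<alpha> \<nu> + \<beta> \<nu>)) [0..<n]) else 0)"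
    by (simp only: prod_list_of_nat prod_list_if_zero)
  also have "(\<forall>\<nu>\<in>set [0..<n]. below_pow p (d \<nu>) (\<alpha> \<nu> + \<beta> \<nu>)) \<longleftrightarrow> (\<lambda>\<nu>. \<alpha> \<nu> + \<beta> \<nu>) \<in> index_set p n d"
    using a b by (auto simp: index_set_iff multi_idx_def)
  finally show ?thesis by (simp add: prod_upt_conv dp_multi_def)
qed

lemma y_der:
  assumes nu: "\<nu> < n" and a: "\<alpha> \<in> index_set p n d"
  shows "\<delta> \<nu> (dp_multi p n g \<alpha>) = (if \<alpha> \<nu> = 0 then 0 else dp_multi p n g (\<alpha>(\<nu> := \<alpha> \<nu> - 1)))"
proof -
  have D: "derivation (\<delta> \<nu>)" using der nu by simp
  have ab: "\<forall>\<mu><n. below_pow p (d \<mu>) (\<alpha> \<mu>)" using a by (auto simp: index_set_iff)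
  have "\<delta> \<nu> (dp_multi p n g \<alpha>) = prod_list (map (\<lambda>\<mu>. if \<mu> = \<nu> then \<delta> \<nu> (dp_elem p (g \<nu>) (\<alpha> \<nu>)) else dp_elem p (g \<mu>) (\<alpha> \<mu>)) [0..<n])"
    unfolding dp_multi_def
  proof (rule der_prod_list_single[OF D])
    show "\<forall>\<mu>\<in>set [0..<n]. \<mu> \<noteq> \<nu> \<longrightarrow> \<delta> \<nu> (dp_elem p (g \<mu>) (\<alpha> \<mu>)) = 0"
      using H1 nu ab by (auto intro!: dp_elem_kill[OF prime chp D, of "d _"])
  qed (use nu in auto)
  also have "\<delta> \<nu> (dp_elem p (g \<nu>) (\<alpha> \<nu>)) = (if \<alpha> \<nu> = 0 then 0 else dp_elem p (g \<nu>) (\<alpha> \<nu> - 1))"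
    using nu cm H2 H1 ab by (intro dp_elem_deriv[OF prime chp D, of "d \<nu>"]) auto
  finally have e: "\<delta> \<nu> (dp_multi p n g \<alpha>) = prod_list (map (\<lambda>\<mu>. if \<mu> = \<nu> then (if \<alpha> \<nu> = 0 then 0 else dp_elem p (g \<nu>) (\<alpha> \<nu> - 1)) else dp_elem p (g \<mu>) (\<alpha> \<mu>)) [0..<n])" .
  show ?thesis
  proof (cases "\<alpha> \<nu> = 0")
    case True
    have "0 \<in> set (map (\<lambda>\<mu>. if \<mu> = \<nu> then (if \<alpha> \<nu> = 0 then 0 else dp_elem p (g \<nu>) (\<alpha> \<nu> - 1)) else dp_elem p (g \<mu>) (\<alpha> \<mu>)) [0..<n])"
      using True nu by (auto intro!: image_eqI[of _ _ \<nu>])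
    then show ?thesis using e True prod_list_zero by metis
  next
    case False
    have m: "prod_list (map (\<lambda>\<mu>. if \<mu> = \<nu> then dp_elem p (g \<nu>) (\<alpha> \<nu> - 1) else dp_elem p (g \<mu>) (\<alpha> \<mu>)) [0..<n])
        = dp_multi p n g (\<alpha>(\<nu> := \<alpha> \<nu> - 1))"
      unfolding dp_multi_def using False by (intro arg_cong[where f=prod_list] map_cong) auto
    show ?thesis using False by (simp only: e False if_False m)
  qed
qed

lemma y_iter:
  assumes nu: "\<nu> < n" and a: "\<alpha> \<in> index_set p n d"
  shows "(\<delta> \<nu> ^^ m) (dp_multi p n g \<alpha>) = (if m \<le> \<alpha> \<nu> then dp_multi p n g (\<alpha>(\<nu> := \<alpha> \<nu> - m)) else 0)"
proof (induction m)
  case 0 then show ?case by simp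
next
  case (Suc m)
  have D: "derivation (\<delta> \<nu>)" using der nu by simp
  show ?case
  proof (cases "m \<le> \<alpha> \<nu>")
    case True
    let ?a = "\<alpha>(\<nu> := \<alpha> \<nu> - m)"
    have a': "?a \<in> index_set p n d" using a by (rule index_set_dec) auto
    have "(\<delta> \<nu> ^^ Suc m) (dp_multi p n g \<alpha>) = \<delta> \<nu> (dp_multi p n g ?a)" using Suc True by simp
    also have "\<dots> = (if ?a \<nu> = 0 then 0 else dp_multi p n g (?a(\<nu> := ?a \<nu> - 1)))" by (rule y_der[OF nu a'])
    also have "\<dots> = (if Suc m \<le> \<alpha> \<nu> then dp_multi p n g (\<alpha>(\<nu> := \<alpha> \<nu> - Suc m)) else 0)"
      using True by auto
    finally show ?thesis .
  next
    case False
    then show ?thesis using Suc der_zero[OF D] by simp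
  qed
qed

lemma y_foldr:
  assumes "set L \<subseteq> {..<n}" "distinct L" "\<beta> \<in> index_set p n d"
  shows "foldr (\<lambda>\<nu> f. (\<delta> \<nu> ^^ \<alpha> \<nu>) \<circ> f) L id (dp_multi p n g \<beta>) =
    (if \<forall>\<nu>\<in>set L. \<alpha> \<nu> \<le> \<beta> \<nu> then dp_multi p n g (\<lambda>\<mu>. if \<mu> \<in> set L then \<beta> \<mu> - \<alpha> \<mu> else \<beta> \<mu>) else 0)"
  using assms(1,2)
proof (induction L)
  case Nil then show ?case by simp
next
  case (Cons a L)
  have an: "a < n" and aL: "a \<notin> set L" using Cons.prems by auto
  have D: "derivation (\<delta> a)" using der an by simp
  have IH: "foldr (\<lambda>\<nu> f. (\<delta> \<nu> ^^ \<alpha> \<nu>) \<circ> f) L id (dp_multi p n g \<beta>) =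
    (if \<forall>\<nu>\<in>set L. \<alpha> \<nu> \<le> \<beta> \<nu> then dp_multi p n g (\<lambda>\<mu>. if \<mu> \<in> set L then \<beta> \<mu> - \<alpha> \<mu> else \<beta> \<mu>) else 0)"
  proof -
    have "set L \<subseteq> {..<n}" "distinct L" using Cons.prems by auto
    then show ?thesis by (rule Cons.IH)
  qed
  show ?case
  proof (cases "\<forall>\<nu>\<in>set L. \<alpha> \<nu> \<le> \<beta> \<nu>")
    case True
    let ?b = "\<lambda>\<mu>. if \<mu> \<in> set L then \<beta> \<mu> - \<alpha> \<mu> else \<beta> \<mu>"
    have b': "?b \<in> index_set p n d" using assms(3) by (rule index_set_dec) auto
    have "foldr (\<lambda>\<nu> f. (\<delta> \<nu> ^^ \<alpha> \<nu>) \<circ> f) (a # L) id (dp_multi p n g \<beta>) = (\<delta> a ^^ \<alpha> a) (dp_multi p n g ?b)"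
      using IH True by simp
    also have "\<dots> = (if \<alpha> a \<le> ?b a then dp_multi p n g (?b(a := ?b a - \<alpha> a)) else 0)"
      by (rule y_iter[OF an b'])
    also have "?b(a := ?b a - \<alpha> a) = (\<lambda>\<mu>. if \<mu> \<in> set (a # L) then \<beta> \<mu> - \<alpha> \<mu> else \<beta> \<mu>)"
      using aL by auto
    finally show ?thesis using True aL by auto
  next
    case False
    have "foldr (\<lambda>\<nu> f. (\<delta> \<nu> ^^ \<alpha> \<nu>) \<circ> f) (a # L) id (dp_multi p n g \<beta>) =
       (\<delta> a ^^ \<alpha> a) (foldr (\<lambda>\<nu> f. (\<delta> \<nu> ^^ \<alpha> \<nu>) \<circ> f) L id (dp_multi p n g \<beta>))" by simp
    also have "\<dots> = 0" unfolding IH if_not_P[OF False] using der_funpow_zero[OF D] by simp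
    finally have c0: "foldr (\<lambda>\<nu> f. (\<delta> \<nu> ^^ \<alpha> \<nu>) \<circ> f) (a # L) id (dp_multi p n g \<beta>) = 0" .
    have nc: "\<not> (\<forall>\<nu>\<in>set (a # L). \<alpha> \<nu> \<le> \<beta> \<nu>)" using False by auto
    show ?thesis unfolding if_not_P[OF nc] by (rule c0)
  qed
qed

lemma backward: "iterative_descent n (index_set p n d) \<delta> (dp_multi p n g)"
  unfolding iterative_descent_def
proof (intro conjI ballI)
  show "dp_multi p n g (\<lambda>_. 0) = 1" unfolding dp_multi_def
    by (induction n) auto
next
  fix \<alpha> \<beta> assume "\<alpha> \<in> index_set p n d" "\<beta> \<in> index_set p n d"
  then show "dp_multi p n g \<alpha> * dp_multi p n g \<beta> =
        of_nat (\<Prod>\<nu><n. (\<alpha> \<nu> + \<beta> \<nu>) choose \<beta> \<nu>) *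
        (if (\<lambda>\<nu>. \<alpha> \<nu> + \<beta> \<nu>) \<in> index_set p n d then dp_multi p n g (\<lambda>\<nu>. \<alpha> \<nu> + \<beta> \<nu>) else 0)"
    by (rule y_mult)
next
  fix \<alpha> \<beta> assume a: "\<alpha> \<in> multi_idx n" and b: "\<beta> \<in> index_set p n d"
  have "multi_iter n \<delta> \<alpha> (dp_multi p n g \<beta>) =
    (if \<forall>\<nu>\<in>set [0..<n]. \<alpha> \<nu> \<le> \<beta> \<nu> then dp_multi p n g (\<lambda>\<mu>. if \<mu> \<in> set [0..<n] then \<beta> \<mu> - \<alpha> \<mu> else \<beta> \<mu>) else 0)"
    unfolding multi_iter_def using b by (intro y_foldr) auto
  moreover have "(\<lambda>\<mu>. if \<mu> \<in> set [0..<n] then \<beta> \<mu> - \<alpha> \<mu> else \<beta> \<mu>) = (\<lambda>\<nu>. \<beta> \<nu> - \<alpha> \<nu>)"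
    using a b by (auto simp: index_set_def multi_idx_def)
  moreover have eqc: "(\<forall>\<nu>\<in>set [0..<n]. \<alpha> \<nu> \<le> \<beta> \<nu>) \<longleftrightarrow> (\<forall>\<nu><n. \<alpha> \<nu> \<le> \<beta> \<nu>)" by auto
  ultimately show "multi_iter n \<delta> \<alpha> (dp_multi p n g \<beta>) =
        (if \<forall>\<nu><n. \<alpha> \<nu> \<le> \<beta> \<nu> then dp_multi p n g (\<lambda>\<nu>. \<beta> \<nu> - \<alpha> \<nu>) else 0)"
    by (simp only:)
qed

end
theorem corollary2p8:
  fixes p n :: nat
    and \<delta> :: "nat \<Rightarrow> 'a::ring_1 \<Rightarrow> 'a"
    and d :: "nat \<Rightarrow> enat"
    and g :: "nat \<Rightarrow> nat \<Rightarrow> 'a"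
  assumes "prime p"
    and "of_nat p = (0::'a)"
    and "\<forall>\<nu><n. derivation (\<delta> \<nu>)"
    and "\<forall>\<nu><n. \<forall>\<mu><n. \<delta> \<nu> \<circ> \<delta> \<mu> = \<delta> \<mu> \<circ> \<delta> \<nu>"
    and "\<forall>\<nu><n. \<forall>\<mu><n. \<forall>k l. enat k < d \<nu> \<longrightarrow> enat l < d \<mu> \<longrightarrow>
           g \<nu> k * g \<mu> l = g \<mu> l * g \<nu> k"
  shows "iterative_descent n (index_set p n d) \<delta> (dp_multi p n g) \<longleftrightarrow>
    ((\<forall>\<nu><n. \<forall>\<mu><n. \<forall>k. enat k < d \<mu> \<longrightarrow>
        \<delta> \<nu> (g \<mu> k) = (if \<nu> = \<mu> then dp_elem p (g \<mu>) (p ^ k - 1) else 0)) \<and>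
     (\<forall>\<mu><n. \<forall>k. enat k < d \<mu> \<longrightarrow> g \<mu> k ^ p = 0))"
proof
  assume "iterative_descent n (index_set p n d) \<delta> (dp_multi p n g)"
  then show "(\<forall>\<nu><n. \<forall>\<mu><n. \<forall>k. enat k < d \<mu> \<longrightarrow>
        \<delta> \<nu> (g \<mu> k) = (if \<nu> = \<mu> then dp_elem p (g \<mu>) (p ^ k - 1) else 0)) \<and>
     (\<forall>\<mu><n. \<forall>k. enat k < d \<mu> \<longrightarrow> g \<mu> k ^ p = 0)"
    by (rule forward[OF assms(1,2)])
next
  assume h: "(\<forall>\<nu><n. \<forall>\<mu><n. \<forall>k. enat k < d \<mu> \<longrightarrow>
        \<delta> \<nu> (g \<mu> k) = (if \<nu> = \<mu> then dp_elem p (g \<mu>) (p ^ k - 1) else 0)) \<and>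
     (\<forall>\<mu><n. \<forall>k. enat k < d \<mu> \<longrightarrow> g \<mu> k ^ p = 0)"
  show "iterative_descent n (index_set p n d) \<delta> (dp_multi p n g)"
    using backward[OF assms(1,2,3,5) h[THEN conjunct1] h[THEN conjunct2]] .
qed

end
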